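(* Let $R$ be a commutative ring with identity and $M$ a non-zero comultiplication $R$-module. If $G'(M)$ contains a cycle, then the girth of $G'(M)$ is $3$.
   Context: An $R$-module $M$ is a comultiplication module if for every submodule $N$ of $M$ there is an ideal $I$ of $R$ with $N=\mathrm{Ann}_M(I)$. A submodule $N$ of $M$ is large if $N\cap L\neq 0$ for every non-zero submodule $L$ of $M$. The large sum graph $G'(M)$ has as vertex set the set of all non-zero non-large submodules of $M$, and two distinct vertices $N,K$ are adjacent iff $N+K$ is non-large in $M$. *)

theory Defs
  imports "HOL-Algebra.Module" "HOL-Algebra.Ideal"
begin

definition ann_M :: "('a, 'b) module \<Rightarrow> 'a set \<Rightarrow> 'b set" where
  "ann_M M I = {x \<in> carrier M. \<forall>a\<in>I. a \<odot>\<^bsub>M\<^esub> x = \<zero>\<^bsub>M\<^esub>}"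

definition comultiplication_module :: "('a, 'c) ring_scheme \<Rightarrow> ('a, 'b) module \<Rightarrow> bool" where
  "comultiplication_module R M \<longleftrightarrow> module R M \<and>
     (\<forall>N. submodule N R M \<longrightarrow> (\<exists>I. ideal I R \<and> N = ann_M M I))"

definition msum :: "('a, 'b) module \<Rightarrow> 'b set \<Rightarrow> 'b set \<Rightarrow> 'b set" where
  "msum M N K = {x \<oplus>\<^bsub>M\<^esub> y | x y. x \<in> N \<and> y \<in> K}"

definition large_submodule :: "('a, 'c) ring_scheme \<Rightarrow> ('a, 'b) module \<Rightarrow> 'b set \<Rightarrow> bool" where
  "large_submodule R M N \<longleftrightarrow> submodule N R M \<and>
     (\<forall>L. submodule L R M \<and> L \<noteq> {\<zero>\<^bsub>M\<^esub>} \<longrightarrow> N \<inter> L \<noteq> {\<zero>\<^bsub>M\<^esub>})"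

definition lsg_vertices :: "('a, 'c) ring_scheme \<Rightarrow> ('a, 'b) module \<Rightarrow> 'b set set" where
  "lsg_vertices R M = {N. submodule N R M \<and> N \<noteq> {\<zero>\<^bsub>M\<^esub>} \<and> \<not> large_submodule R M N}"

definition lsg_adj :: "('a, 'c) ring_scheme \<Rightarrow> ('a, 'b) module \<Rightarrow> 'b set \<Rightarrow> 'b set \<Rightarrow> bool" where
  "lsg_adj R M N K \<longleftrightarrow> N \<in> lsg_vertices R M \<and> K \<in> lsg_vertices R M \<and> N \<noteq> K \<and>
     \<not> large_submodule R M (msum M N K)"

definition is_cycle :: "'v set \<Rightarrow> ('v \<Rightarrow> 'v \<Rightarrow> bool) \<Rightarrow> 'v list \<Rightarrow> bool" where
  "is_cycle V E cs \<longleftrightarrow> length cs \<ge> 3 \<and> distinct cs \<and> set cs \<subseteq> V \<and>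
     (\<forall>i < length cs. E (cs ! i) (cs ! ((i + 1) mod length cs)))"

definition has_cycle :: "'v set \<Rightarrow> ('v \<Rightarrow> 'v \<Rightarrow> bool) \<Rightarrow> bool" where
  "has_cycle V E \<longleftrightarrow> (\<exists>cs. is_cycle V E cs)"

definition girth :: "'v set \<Rightarrow> ('v \<Rightarrow> 'v \<Rightarrow> bool) \<Rightarrow> nat" where
  "girth V E = (LEAST n. \<exists>cs. is_cycle V E cs \<and> length cs = n)"

end

theory Submission
  imports Defs
begin

locale mymod = module R M for R :: "('a,'c) ring_scheme" and M :: "('a,'b) module"

context mymod
begin

lemma sub_zero: "submodule H R M \<Longrightarrow> \<zero>\<^bsub>M\<^esub> \<in> H"
proof -
  assume h: "submodule H R M"
  then obtain x where x: "x \<in> H" using submoduleE(2)[OF h] by blast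
  have "\<ominus>\<^bsub>M\<^esub> x \<in> H" using submoduleE(3)[OF h x] .
  hence "x \<oplus>\<^bsub>M\<^esub> \<ominus>\<^bsub>M\<^esub> x \<in> H" using submoduleE(5)[OF h] x by blast
  moreover have "x \<in> carrier M" using submoduleE(1)[OF h] x by blast
  ultimately show ?thesis using r_neg by metis
qed

lemma msum_sub:
  assumes a: "submodule A R M" and b: "submodule B R M"
  shows "submodule (msum M A B) R M"
proof (rule submoduleI)
  note sA = submoduleE[OF a] and sB = submoduleE[OF b]
  show "msum M A B \<subseteq> carrier M" unfolding msum_def using sA(1) sB(1) by blast
  show "\<zero>\<^bsub>M\<^esub> \<in> msum M A B" unfolding msum_def using sub_zero[OF a] sub_zero[OF b]
    by (intro CollectI exI[of _ "\<zero>\<^bsub>M\<^esub>"]) simp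
  show "\<ominus>\<^bsub>M\<^esub> z \<in> msum M A B" if zz: "z \<in> msum M A B" for z
  proof -
    obtain x y where xy: "z = x \<oplus>\<^bsub>M\<^esub> y" "x \<in> A" "y \<in> B" using zz unfolding msum_def by blast
    have c: "x \<in> carrier M" "y \<in> carrier M" using xy sA(1) sB(1) by auto
    have "\<ominus>\<^bsub>M\<^esub> z = (\<ominus>\<^bsub>M\<^esub> x) \<oplus>\<^bsub>M\<^esub> (\<ominus>\<^bsub>M\<^esub> y)" using c xy(1) by (simp add: minus_add)
    thus ?thesis unfolding msum_def using sA(3)[OF xy(2)] sB(3)[OF xy(3)] by blast
  qed
  show "z \<oplus>\<^bsub>M\<^esub> w \<in> msum M A B" if zz: "z \<in> msum M A B" "w \<in> msum M A B" for z w
  proof -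
    obtain x y where xy: "z = x \<oplus>\<^bsub>M\<^esub> y" "x \<in> A" "y \<in> B" using zz(1) unfolding msum_def by blast
    obtain x' y' where xy': "w = x' \<oplus>\<^bsub>M\<^esub> y'" "x' \<in> A" "y' \<in> B" using zz(2) unfolding msum_def by blast
    have c: "x \<in> carrier M" "y \<in> carrier M" "x' \<in> carrier M" "y' \<in> carrier M"
      using xy xy' sA(1) sB(1) by auto
    have "z \<oplus>\<^bsub>M\<^esub> w = (x \<oplus>\<^bsub>M\<^esub> x') \<oplus>\<^bsub>M\<^esub> (y \<oplus>\<^bsub>M\<^esub> y')"
      using c xy(1) xy'(1) by (simp add: a_ac)
    thus ?thesis unfolding msum_def using sA(5)[OF xy(2) xy'(2)] sB(5)[OF xy(3) xy'(3)] by blast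
  qed
  show "a \<odot>\<^bsub>M\<^esub> z \<in> msum M A B" if zz: "a \<in> carrier R" "z \<in> msum M A B" for a z
  proof -
    obtain x y where xy: "z = x \<oplus>\<^bsub>M\<^esub> y" "x \<in> A" "y \<in> B" using zz(2) unfolding msum_def by blast
    have c: "x \<in> carrier M" "y \<in> carrier M" using xy sA(1) sB(1) by auto
    have "a \<odot>\<^bsub>M\<^esub> z = a \<odot>\<^bsub>M\<^esub> x \<oplus>\<^bsub>M\<^esub> a \<odot>\<^bsub>M\<^esub> y" using c xy(1) zz(1) smult_r_distr by simp
    thus ?thesis unfolding msum_def using sA(4)[OF zz(1) xy(2)] sB(4)[OF zz(1) xy(3)] by blast
  qed
qed

lemma msum_sup1: "submodule B R M \<Longrightarrow> A \<subseteq> carrier M \<Longrightarrow> A \<subseteq> msum M A B"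
  unfolding msum_def using sub_zero
  by (smt (verit, best) mem_Collect_eq r_zero subset_iff)

lemma msum_comm: "A \<subseteq> carrier M \<Longrightarrow> B \<subseteq> carrier M \<Longrightarrow> msum M A B = msum M B A"
  unfolding msum_def by (auto, (metis a_comm subsetD)+)

lemma msum_le: "submodule C R M \<Longrightarrow> A \<subseteq> C \<Longrightarrow> B \<subseteq> C \<Longrightarrow> msum M A B \<subseteq> C"
  unfolding msum_def using submoduleE(5) by blast

lemma nonlarge_mono:
  assumes "submodule C R M" "\<not> large_submodule R M C" "A \<subseteq> C"
  shows "\<not> large_submodule R M A"
proof
  assume l: "large_submodule R M A"
  hence sa: "submodule A R M" unfolding large_submodule_def by blast
  obtain L where L: "submodule L R M" "L \<noteq> {\<zero>\<^bsub>M\<^esub>}" "C \<inter> L = {\<zero>\<^bsub>M\<^esub>}"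
    using assms(1,2) unfolding large_submodule_def by blast
  have "A \<inter> L \<noteq> {\<zero>\<^bsub>M\<^esub>}" using l L unfolding large_submodule_def by blast
  moreover have "\<zero>\<^bsub>M\<^esub> \<in> A \<inter> L" using sub_zero sa L(1) by blast
  ultimately obtain x where "x \<in> A \<inter> L" "x \<noteq> \<zero>\<^bsub>M\<^esub>" by blast
  thus False using L(3) assms(3) by blast
qed

lemma vert_sub: "N \<in> lsg_vertices R M \<Longrightarrow> submodule N R M"
  unfolding lsg_vertices_def by blast

lemma vert_carr: "N \<in> lsg_vertices R M \<Longrightarrow> N \<subseteq> carrier M"
  using vert_sub submoduleE(1) by blast

lemma adj_sym: "lsg_adj R M A B \<Longrightarrow> lsg_adj R M B A"
  unfolding lsg_adj_def using msum_comm vert_carr by metis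

lemma adj_sub:
  assumes "lsg_adj R M A B" "lsg_adj R M B C" "A \<noteq> C" "A \<subseteq> D" "C \<subseteq> D"
    "D \<in> {A, B, C}"
  shows "lsg_adj R M A C"
proof -
  have vA: "A \<in> lsg_vertices R M" and vC: "C \<in> lsg_vertices R M" and vD: "D \<in> lsg_vertices R M"
    using assms(1,2,6) unfolding lsg_adj_def by auto
  have "\<not> large_submodule R M D" using vD unfolding lsg_vertices_def by blast
  hence "\<not> large_submodule R M (msum M A C)"
    using nonlarge_mono[OF vert_sub[OF vD]] msum_le[OF vert_sub[OF vD] assms(4,5)] by blast
  thus ?thesis unfolding lsg_adj_def using vA vC assms(3) by blast
qed

end

lemma cyc3: "is_cycle V E [x, y, z] \<longleftrightarrow> distinct [x,y,z] \<and> {x,y,z} \<subseteq> V \<and> E x y \<and> E y z \<and> E z x"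
proof -
  have "(\<forall>i<length [x,y,z]. E ([x,y,z] ! i) ([x,y,z] ! ((i + 1) mod length [x,y,z])))
        \<longleftrightarrow> E x y \<and> E y z \<and> E z x" (is "?L \<longleftrightarrow> ?R")
  proof
    assume L: ?L
    have "E x y" using L[rule_format, of 0] by simp
    moreover have "E y z" using L[rule_format, of 1] by simp
    moreover have "E z x" using L[rule_format, of 2] by simp
    ultimately show ?R by blast
  next
    assume R: ?R
    show ?L
    proof (intro allI impI)
      fix i assume "i < length [x,y,z]"
      hence "i = 0 \<or> i = 1 \<or> i = 2" by auto
      thus "E ([x,y,z] ! i) ([x,y,z] ! ((i + 1) mod length [x,y,z]))" using R by auto
    qed
  qed
  thus ?thesis unfolding is_cycle_def by simp
qed

context mymod
begin

lemma tri_incomp: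
  assumes "lsg_adj R M A B" "\<not> A \<subseteq> B" "\<not> B \<subseteq> A"
  shows "\<exists>cs. is_cycle (lsg_vertices R M) (lsg_adj R M) cs \<and> length cs = 3"
proof -
  let ?S = "msum M A B"
  have vA: "A \<in> lsg_vertices R M" and vB: "B \<in> lsg_vertices R M"
    using assms(1) unfolding lsg_adj_def by auto
  have sA: "submodule A R M" and sB: "submodule B R M" using vA vB vert_sub by auto
  have cA: "A \<subseteq> carrier M" and cB: "B \<subseteq> carrier M" using vA vB vert_carr by auto
  have sS: "submodule ?S R M" using msum_sub[OF sA sB] .
  have AS: "A \<subseteq> ?S" using msum_sup1[OF sB cA] .
  have BS: "B \<subseteq> ?S" using msum_sup1[OF sA cB] msum_comm[OF cA cB] by simp
  have nl: "\<not> large_submodule R M ?S" using assms(1) unfolding lsg_adj_def by blast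
  have "A \<noteq> {\<zero>\<^bsub>M\<^esub>}" using vA unfolding lsg_vertices_def by blast
  moreover have "\<zero>\<^bsub>M\<^esub> \<in> A" using sub_zero[OF sA] .
  ultimately have "?S \<noteq> {\<zero>\<^bsub>M\<^esub>}" using AS by blast
  hence vS: "?S \<in> lsg_vertices R M" unfolding lsg_vertices_def using sS nl by blast
  have AneS: "A \<noteq> ?S" using BS assms(3) by blast
  have BneS: "B \<noteq> ?S" using AS assms(2) by blast
  have AB: "A \<noteq> B" using assms(2) by blast
  have e1: "lsg_adj R M B ?S"
    unfolding lsg_adj_def using vB vS BneS
      nonlarge_mono[OF sS nl msum_le[OF sS BS order_refl]] by blast
  have e2: "lsg_adj R M ?S A"
    unfolding lsg_adj_def using vA vS AneS
      nonlarge_mono[OF sS nl msum_le[OF sS order_refl AS]] by blast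
  show ?thesis
    by (rule exI[of _ "[A, B, ?S]"]) (simp add: cyc3 AB AneS BneS vA vB vS assms(1) e1 e2)
qed

lemma tri:
  assumes ab: "lsg_adj R M A B" and bc: "lsg_adj R M B C" and ac: "A \<noteq> C"
    and nm: "\<not> (B \<subseteq> A \<and> B \<subseteq> C)"
  shows "\<exists>cs. is_cycle (lsg_vertices R M) (lsg_adj R M) cs \<and> length cs = 3"
proof (cases "A \<subseteq> B \<or> B \<subseteq> A")
  case False thus ?thesis using tri_incomp[OF ab] by blast
next
  case c1: True
  show ?thesis
  proof (cases "B \<subseteq> C \<or> C \<subseteq> B")
    case False thus ?thesis using tri_incomp[OF bc] by blast
  next
    case c2: True
    have vA: "A \<in> lsg_vertices R M" and vB: "B \<in> lsg_vertices R M" and vC: "C \<in> lsg_vertices R M"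
      and AB: "A \<noteq> B" and BC: "B \<noteq> C"
      using ab bc unfolding lsg_adj_def by auto
    have "lsg_adj R M A C"
    proof -
      have ba: "lsg_adj R M B A" and cb: "lsg_adj R M C B" using adj_sym ab bc by auto
      consider "A \<subseteq> B" "C \<subseteq> B" | "A \<subseteq> B" "B \<subseteq> C" | "B \<subseteq> A" "C \<subseteq> B"
        using c1 c2 nm by blast
      thus ?thesis
      proof cases
        case 1 thus ?thesis using adj_sub[OF ab bc ac, of B] ab cb by blast
      next
        case 2 thus ?thesis using adj_sub[OF ab bc ac, of C] bc by blast
      next
        case 3 thus ?thesis using adj_sub[OF ab bc ac, of A] adj_sym by blast
      qed
    qed
    hence "lsg_adj R M C A" using adj_sym by blast
    thus ?thesis
      by (intro exI[of _ "[A, B, C]"]) (simp add: cyc3 AB BC ac vA vB vC ab bc)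
  qed
qed

end

theorem theorem2p8:
  fixes R :: "('a, 'c) ring_scheme" and M :: "('a, 'b) module"
  assumes "cring R"
    and "comultiplication_module R M"
    and "carrier M \<noteq> {\<zero>\<^bsub>M\<^esub>}"
    and "has_cycle (lsg_vertices R M) (lsg_adj R M)"
  shows "girth (lsg_vertices R M) (lsg_adj R M) = 3"
proof -
  interpret mymod R M using assms(2) unfolding comultiplication_module_def mymod_def by blast
  obtain cs where cs: "is_cycle (lsg_vertices R M) (lsg_adj R M) cs"
    using assms(4) unfolding has_cycle_def by blast
  define n where "n = length cs"
  have n3: "n \<ge> 3" and dis: "distinct cs"
    and adj: "\<And>i. i < n \<Longrightarrow> lsg_adj R M (cs ! i) (cs ! ((i + 1) mod n))"
    using cs unfolding is_cycle_def n_def by auto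
  have a0: "lsg_adj R M (cs ! (n - 1)) (cs ! 0)" using adj[of "n - 1"] n3 by simp
  have a1: "lsg_adj R M (cs ! 0) (cs ! 1)" using adj[of 0] n3 by simp
  have a2: "lsg_adj R M (cs ! 1) (cs ! 2)" using adj[of 1] n3 by (simp add: numeral_2_eq_2)
  have ne: "cs \<noteq> []" using n3 n_def by auto
  have d1: "cs ! (n - 1) \<noteq> cs ! 1"
  proof
    assume "cs ! (n - 1) = cs ! 1"
    hence "(n - 1) = (1::nat)" using nth_eq_iff_index_eq[OF dis, of "n - 1" "1"] n3 ne by (simp add: n_def)
    thus False using n3 by simp
  qed
  have d2: "cs ! (0) \<noteq> cs ! 2"
  proof
    assume "cs ! (0) = cs ! 2"
    hence "(0) = (2::nat)" using nth_eq_iff_index_eq[OF dis, of "0" "2"] n3 ne by (simp add: n_def)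
    thus False using n3 by simp
  qed
  have d3: "cs ! (0) \<noteq> cs ! 1"
  proof
    assume "cs ! (0) = cs ! 1"
    hence "(0) = (1::nat)" using nth_eq_iff_index_eq[OF dis, of "0" "1"] n3 ne by (simp add: n_def)
    thus False using n3 by simp
  qed
  have ex: "\<exists>cs. is_cycle (lsg_vertices R M) (lsg_adj R M) cs \<and> length cs = 3"
  proof (cases "cs ! 0 \<subseteq> cs ! (n - 1) \<and> cs ! 0 \<subseteq> cs ! 1")
    case False thus ?thesis using tri[OF a0 a1 d1] by blast
  next
    case True
    hence "\<not> (cs ! 1 \<subseteq> cs ! 0 \<and> cs ! 1 \<subseteq> cs ! 2)" using d3 by blast
    thus ?thesis using tri[OF a1 a2 d2] by blast
  qed
  show ?thesis unfolding girth_def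
  proof (rule Least_equality)
    show "\<exists>cs. is_cycle (lsg_vertices R M) (lsg_adj R M) cs \<and> length cs = 3" using ex .
  next
    fix m assume "\<exists>cs. is_cycle (lsg_vertices R M) (lsg_adj R M) cs \<and> length cs = m"
    thus "3 \<le> m" unfolding is_cycle_def by auto
  qed
qed

end
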